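(* Suppose the equation of state is asymptotically polytropic with $n_0=3$. Then no orbit of the system lying in the interior of the cube $(0,1)^3$ converges as $\lambda\to+\infty$ to the fixed point $P_1=(U,Q,\Omega)=(0,1/2,0)$. Consequently every orbit from the interior of the cube has $P_2=(0,1,0)$ as its $\omega$-limit.
   Context: Equation of state: $\rho=\rho(p)$ with $\rho>0$ for $p>0$, $\eta(p)=\int_0^p dp'/\rho(p')$ finite; index function $n(\eta)=\frac{\eta}{\rho}\frac{d\rho}{d\eta}$; asymptotically polytropic: $n$ is $C^1$ on $(0,\infty)$, bounded and non-negative, $n(\eta)-n_0=O(\eta^{a_0})$ as $\eta\to0$, $n(\eta)-n_1=O(\eta^{-a_1})$ as $\eta\to\infty$, $a_0,a_1>0$. The system on $[0,1]^3$ is $\frac{dU}{d\lambda}=U(1-U)[(1-Q)(3-4U)-n(\Omega)Q(1-U)]$, $\frac{dQ}{d\lambda}=Q(1-Q)[(2U-1)(1-Q)+Q(1-U)]$, $\frac{d\Omega}{d\lambda}=-a\Omega(1-\Omega)Q(1-U)$, with $0<a<\min(a_0,a_1)$ and $n(\Omega)=n(\eta)$ at $\eta=(\Omega/(1-\Omega))^{1/a}$, $n(0)=n_0$, $n(1)=n_1$. At $P_1$, for $n_0=3$, the linearization has a one-dimensional center subspace. *)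

theory Defs
  imports "HOL-Analysis.Analysis" "HOL-Library.Landau_Symbols"
begin

definition asymptotically_polytropic ::
  "(real \<Rightarrow> real) \<Rightarrow> real \<Rightarrow> real \<Rightarrow> real \<Rightarrow> real \<Rightarrow> bool" where
  "asymptotically_polytropic n n0 n1 a0 a1 \<longleftrightarrow>
     n C1_differentiable_on {0<..} \<and>
     bounded (n ` {0<..}) \<and>
     (\<forall>\<eta>>0. 0 \<le> n \<eta>) \<and>
     a0 > 0 \<and> a1 > 0 \<and>
     (\<lambda>\<eta>. n \<eta> - n0) \<in> O[at_right 0](\<lambda>\<eta>. \<eta> powr a0) \<and>
     (\<lambda>\<eta>. n \<eta> - n1) \<in> O[at_top](\<lambda>\<eta>. \<eta> powr (- a1))"

definition nOmega :: "(real \<Rightarrow> real) \<Rightarrow> real \<Rightarrow> real \<Rightarrow> real \<Rightarrow> real \<Rightarrow> real" where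
  "nOmega n n0 n1 a \<Omega> =
     (if \<Omega> = 0 then n0 else if \<Omega> = 1 then n1
      else n ((\<Omega> / (1 - \<Omega>)) powr (1 / a)))"

definition field :: "(real \<Rightarrow> real) \<Rightarrow> real \<Rightarrow> real \<Rightarrow> real \<Rightarrow>
    real \<times> real \<times> real \<Rightarrow> real \<times> real \<times> real" where
  "field n n0 n1 a p = (case p of (U, Q, \<Omega>) \<Rightarrow>
     (U * (1 - U) * ((1 - Q) * (3 - 4 * U) - nOmega n n0 n1 a \<Omega> * Q * (1 - U)),
      Q * (1 - Q) * ((2 * U - 1) * (1 - Q) + Q * (1 - U)),
      - a * \<Omega> * (1 - \<Omega>) * Q * (1 - U)))"

definition open_cube :: "(real \<times> real \<times> real) set" where
  "open_cube = {0<..<1} \<times> {0<..<1} \<times> {0<..<1}"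

definition omega_limit :: "(real \<Rightarrow> 'a::topological_space) \<Rightarrow> 'a set" where
  "omega_limit x = {p. \<exists>s::nat \<Rightarrow> real. filterlim s at_top sequentially \<and>
                        ((x \<circ> s) \<longlongrightarrow> p) sequentially}"

end

theory Submission
  imports Defs "HOL-Real_Asymp.Real_Asymp"
begin

lemma Kbound:
  assumes ap: "asymptotically_polytropic n 3 n1 a0 a1"
    and a_pos: "0 < a" and a_lt: "a < a0"
  shows "\<exists>K>0. \<forall>w. 0 < w \<and> w < 1 \<longrightarrow> \<bar>nOmega n 3 n1 a w - 3\<bar> \<le> K * (w / (1 - w))"
proof -
  from ap have bO: "(\<lambda>\<eta>. n \<eta> - 3) \<in> O[at_right 0](\<lambda>\<eta>. \<eta> powr a0)"
    and bd: "bounded (n ` {0<..})"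
    unfolding asymptotically_polytropic_def by auto
  obtain C where C: "C > 0" "eventually (\<lambda>\<eta>. norm (n \<eta> - 3) \<le> C * norm (\<eta> powr a0)) (at_right 0)"
    using landau_o.bigE[OF bO] by blast
  then obtain b where b: "b > 0" "\<forall>y>0. y < b \<longrightarrow> \<bar>n y - 3\<bar> \<le> C * \<bar>y powr a0\<bar>"
    unfolding eventually_at_right_field by auto
  obtain M where M: "\<forall>y\<in>n ` {0<..}. norm y \<le> M" using bd unfolding bounded_iff by blast
  define d where "d = min b 1"
  have d: "d > 0" "d \<le> 1" "d \<le> b" using b by (auto simp: d_def)
  define K where "K = C + (M + 3) / d powr a + 1"
  have M0: "M \<ge> 0" using M by (metis abs_ge_zero greaterThan_iff image_eqI less_numeral_extra(1) order_trans real_norm_def)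
  have Kpos: "K > 0" unfolding K_def using C d M0 by (auto intro!: add_nonneg_pos)
  show ?thesis
  proof (intro exI[of _ K] conjI allI impI Kpos)
    fix w :: real assume w: "0 < w \<and> w < 1"
    define z where "z = w / (1 - w)"
    have z: "z > 0" using w by (simp add: z_def)
    define \<eta> where "\<eta> = z powr (1 / a)"
    have eta: "\<eta> > 0" using z by (simp add: \<eta>_def)
    have za: "\<eta> powr a = z" unfolding \<eta>_def powr_powr using a_pos z by simp
    have nO: "nOmega n 3 n1 a w = n \<eta>" using w by (simp add: nOmega_def \<eta>_def z_def)
    show "\<bar>nOmega n 3 n1 a w - 3\<bar> \<le> K * (w / (1 - w))"
    proof (cases "\<eta> < d")
      case True
      have "\<bar>n \<eta> - 3\<bar> \<le> C * \<eta> powr a0" using b eta True d by auto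
      also have "\<dots> \<le> C * \<eta> powr a"
        using powr_mono'[of a a0 \<eta>] a_lt True d eta C by auto
      also have "\<dots> = C * z" using za by simp
      also have "\<dots> \<le> K * z" using z C M0 d unfolding K_def
        by (intro mult_right_mono) (auto intro!: add_nonneg_nonneg)
      finally show ?thesis using nO z_def by simp
    next
      case False
      have "d powr a \<le> \<eta> powr a" using False d a_pos by (intro powr_mono2) auto
      hence dz: "d powr a \<le> z" using za by simp
      have "\<bar>n \<eta> - 3\<bar> \<le> M + 3" using M eta by force
      also have "\<dots> = ((M + 3) / d powr a) * d powr a" using d by simp
      also have "\<dots> \<le> ((M + 3) / d powr a) * z" using dz M0 d by (intro mult_left_mono) auto
      also have "\<dots> \<le> K * z" using z C unfolding K_def by (intro mult_right_mono) auto
      finally show ?thesis using nO z_def by simp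
    qed
  qed
qed

lemma comp_derivs:
  assumes "(x has_vector_derivative v) F"
  shows "((\<lambda>t. fst (x t)) has_real_derivative fst v) F"
    and "((\<lambda>t. fst (snd (x t))) has_real_derivative fst (snd v)) F"
    and "((\<lambda>t. snd (snd (x t))) has_real_derivative snd (snd v)) F"
proof -
  have d: "(x has_derivative (\<lambda>h. h *\<^sub>R v)) F" using assms by (simp add: has_vector_derivative_def)
  have "((\<lambda>t. fst (x t)) has_derivative (\<lambda>h. fst (h *\<^sub>R v))) F" by (rule has_derivative_fst[OF d])
  then show "((\<lambda>t. fst (x t)) has_real_derivative fst v) F"
    by (simp add: has_field_derivative_def mult.commute[of _ "fst _"] mult.commute[of _ "snd _"] mult.commute[of _ "fst (snd _)"] mult.commute[of _ "snd (snd _)"])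
  have "((\<lambda>t. snd (x t)) has_derivative (\<lambda>h. snd (h *\<^sub>R v))) F" by (rule has_derivative_snd[OF d])
  then have d2: "((\<lambda>t. snd (x t)) has_derivative (\<lambda>h. h *\<^sub>R snd v)) F" by simp
  have "((\<lambda>t. fst (snd (x t))) has_derivative (\<lambda>h. fst (h *\<^sub>R snd v))) F" by (rule has_derivative_fst[OF d2])
  then show "((\<lambda>t. fst (snd (x t))) has_real_derivative fst (snd v)) F"
    by (simp add: has_field_derivative_def mult.commute[of _ "fst _"] mult.commute[of _ "snd _"] mult.commute[of _ "fst (snd _)"] mult.commute[of _ "snd (snd _)"])
  have "((\<lambda>t. snd (snd (x t))) has_derivative (\<lambda>h. snd (h *\<^sub>R snd v))) F" by (rule has_derivative_snd[OF d2])
  then show "((\<lambda>t. snd (snd (x t))) has_real_derivative snd (snd v)) F"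
    by (simp add: has_field_derivative_def mult.commute[of _ "fst _"] mult.commute[of _ "snd _"] mult.commute[of _ "fst (snd _)"] mult.commute[of _ "snd (snd _)"])
qed

lemma deriv_at_pos:
  assumes "(f has_real_derivative D) (at t within {0..})" "t > 0"
  shows "(f has_real_derivative D) (at t)"
proof -
  have "at t within {0..} = at t" using assms(2) by (intro at_within_interior) auto
  then show ?thesis using assms(1) by simp
qed

lemma cont_from_deriv:
  assumes "\<forall>t\<ge>0. (f has_real_derivative f' t) (at t within {0..})" "0 \<le> a"
  shows "continuous_on {a..b} f"
proof -
  have "continuous_on {0..} f"
    unfolding continuous_on_eq_continuous_within
    using assms(1) DERIV_continuous by (metis atLeast_iff)
  then show ?thesis by (rule continuous_on_subset) (use assms(2) in auto)
qed

lemma mono_deriv: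
  fixes f f' :: "real \<Rightarrow> real"
  assumes d: "\<forall>t\<ge>0. (f has_real_derivative f' t) (at t within {0..})"
    and "0 \<le> a" "a \<le> b" and nn: "\<And>t. a < t \<Longrightarrow> t < b \<Longrightarrow> f' t \<ge> 0"
  shows "f a \<le> f b"
proof (rule DERIV_nonneg_imp_increasing_open[OF \<open>a \<le> b\<close>])
  fix t assume t: "a < t" "t < b"
  then show "\<exists>y. (f has_real_derivative y) (at t) \<and> 0 \<le> y"
    using d deriv_at_pos[of f "f' t" t] nn[OF t] \<open>0 \<le> a\<close> by (intro exI[of _ "f' t"]) auto
next
  show "continuous_on {a..b} f" by (rule cont_from_deriv[OF d \<open>0 \<le> a\<close>])
qed

lemma trap:
  fixes f f' :: "real \<Rightarrow> real"
  assumes d: "\<forall>t\<ge>0. (f has_real_derivative f' t) (at t within {0..})"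
    and neg: "\<And>t. t > 0 \<Longrightarrow> f t > c \<Longrightarrow> f' t < 0"
    and f0: "f 0 \<le> c'" and cc: "c \<le> c'" and t: "t \<ge> 0"
  shows "f t \<le> c'"
proof (rule ccontr)
  assume A: "\<not> f t \<le> c'"
  have "continuous_on {0..t} f" by (rule cont_from_deriv[OF d]) simp
  then obtain m where m: "m \<in> {0..t}" "\<forall>y\<in>{0..t}. f y \<le> f m"
    using continuous_attains_sup[of "{0..t}" f] t by auto
  have "f m \<ge> f t" using m t by auto
  hence fm: "f m > c'" using A by simp
  hence "m \<noteq> 0" using f0 by auto
  hence mpos: "m > 0" using m by auto
  have D: "(f has_real_derivative f' m) (at m)" using d mpos deriv_at_pos by auto
  have "f' m < 0" using neg mpos fm cc by auto
  then obtain e where e: "e > 0" "\<forall>h>0. h < e \<longrightarrow> f m < f (m - h)"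
    using DERIV_neg_dec_left[OF D] by blast
  define h where "h = min (e/2) (m/2)"
  have "h > 0" "h < e" "h \<le> m" using e mpos by (auto simp: h_def)
  then have "f m < f (m - h)" "m - h \<in> {0..t}" using e m by auto
  moreover have "f (m - h) \<le> f m" using m(2) \<open>m - h \<in> {0..t}\<close> by blast
  ultimately show False by simp
qed

lemma logit_deriv:
  assumes d: "(f has_real_derivative f') (at t within S)" and "0 < f t" "f t < 1"
  shows "((\<lambda>t. ln (f t) - ln (1 - f t)) has_real_derivative f' / (f t * (1 - f t))) (at t within S)"
proof -
  have "((\<lambda>t. ln (f t) - ln (1 - f t)) has_real_derivative f' / f t - (- f') / (1 - f t)) (at t within S)"
    using assms by (auto intro!: derivative_eq_intros)
  moreover have "f' / f t - (- f') / (1 - f t) = f' / (f t * (1 - f t))"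
    using assms by (simp add: field_simps)
  ultimately show ?thesis by simp
qed
lemma inv_deriv:
  assumes d: "(f has_real_derivative f') (at t within S)" and "f t < 1"
  shows "((\<lambda>t. c / (1 - f t)) has_real_derivative c * f' / (1 - f t)^2) (at t within S)"
proof -
  have "((\<lambda>t. c / (1 - f t)) has_real_derivative - (c * (- f') / (1 - f t) ^ 2)) (at t within S)"
    using assms by (auto intro!: derivative_eq_intros simp: power2_eq_square)
  then show ?thesis by simp
qed
lemma logit_ge:
  fixes q l :: real
  assumes "0 < q" "q < 1" "l \<le> ln q - ln (1 - q)"
  shows "exp l / (1 + exp l) \<le> q"
proof -
  have "exp l \<le> exp (ln q - ln (1 - q))" using assms by simp
  also have "\<dots> = q / (1 - q)" using assms by (simp add: exp_diff)
  finally have "exp l \<le> q / (1 - q)" .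
  hence "exp l * (1 - q) \<le> q" using assms by (simp add: field_simps)
  hence "exp l \<le> q * (1 + exp l)" by (simp add: algebra_simps)
  then show ?thesis by (simp add: divide_le_eq add_pos_pos)
qed

lemma logit_mono:
  fixes q r :: real
  assumes "0 < q" "q \<le> r" "r < 1"
  shows "ln q - ln (1 - q) \<le> ln r - ln (1 - r)"
  using assms by (simp add: diff_mono)

lemma nOmega_nonneg:
  assumes ap: "asymptotically_polytropic n n0 n1 a0 a1" and "0 < w" "w < 1"
  shows "0 \<le> nOmega n n0 n1 a w"
proof -
  have "\<forall>\<eta>>0. 0 \<le> n \<eta>" using ap by (simp add: asymptotically_polytropic_def)
  moreover have "(w / (1 - w)) powr (1 / a) > 0" using assms by simp
  ultimately show ?thesis using assms by (simp add: nOmega_def)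
qed

lemma dW_simp: "a \<noteq> 0 \<Longrightarrow> w \<noteq> (1::real) \<Longrightarrow> (K/a) * (- a * w * (1-w) * q * u)/(1-w)^2 = -(K*w*q*u/(1-w))"
  by (simp add: power2_eq_square)

theorem mainTheorem11:
  fixes n :: "real \<Rightarrow> real" and n1 a0 a1 a :: real
    and x :: "real \<Rightarrow> real \<times> real \<times> real"
  assumes ap: "asymptotically_polytropic n 3 n1 a0 a1"
    and a_pos: "0 < a" and a_lt: "a < min a0 a1"
    and sol: "\<forall>t\<ge>0. (x has_vector_derivative field n 3 n1 a (x t)) (at t within {0..})"
    and interior: "\<forall>t\<ge>0. x t \<in> open_cube"
  shows "\<not> (x \<longlongrightarrow> (0, 1/2, 0)) at_top \<and> omega_limit x = {(0, 1, 0)}"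
proof -
  obtain K where K: "K > 0" "\<And>w. 0 < w \<Longrightarrow> w < 1 \<Longrightarrow> \<bar>nOmega n 3 n1 a w - 3\<bar> \<le> K * (w / (1 - w))"
    using Kbound[OF ap a_pos] a_lt by auto
  define U where "U = (\<lambda>t. fst (x t))"
  define Q where "Q = (\<lambda>t. fst (snd (x t)))"
  define W where "W = (\<lambda>t. snd (snd (x t)))"
  define N where "N = (\<lambda>t. nOmega n 3 n1 a (W t))"
  define dU where "dU = (\<lambda>t. U t * (1 - U t) * ((1 - Q t) * (3 - 4 * U t) - N t * Q t * (1 - U t)))"
  define dQ where "dQ = (\<lambda>t. Q t * (1 - Q t) * ((2 * U t - 1) * (1 - Q t) + Q t * (1 - U t)))"
  define dW where "dW = (\<lambda>t. - a * W t * (1 - W t) * Q t * (1 - U t))"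
  have xt: "x t = (U t, Q t, W t)" for t by (simp add: U_def Q_def W_def)
  have fx: "field n 3 n1 a (x t) = (dU t, dQ t, dW t)" for t
    by (simp add: xt field_def dU_def dQ_def dW_def N_def)
  have cube: "0 < U t" "U t < 1" "0 < Q t" "Q t < 1" "0 < W t" "W t < 1" if "t \<ge> 0" for t
    using interior that unfolding open_cube_def by (auto simp: U_def Q_def W_def)
  have DU: "\<forall>t\<ge>0. (U has_real_derivative dU t) (at t within {0..})"
    using sol comp_derivs(1) fx unfolding U_def by (metis fst_conv)
  have DQ: "\<forall>t\<ge>0. (Q has_real_derivative dQ t) (at t within {0..})"
    using sol comp_derivs(2) fx unfolding Q_def by (metis fst_conv snd_conv)
  have DW: "\<forall>t\<ge>0. (W has_real_derivative dW t) (at t within {0..})"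
    using sol comp_derivs(3) fx unfolding W_def by (metis snd_conv)
  have Nnn: "N t \<ge> 0" if "t \<ge> 0" for t
    using nOmega_nonneg[OF ap] cube[OF that] by (simp add: N_def)
  have NK: "\<bar>N t - 3\<bar> \<le> K * (W t / (1 - W t))" if "t \<ge> 0" for t
    using K(2) cube[OF that] by (simp add: N_def)
  have dWnp: "dW t \<le> 0" if "t \<ge> 0" for t
    using cube[OF that] a_pos unfolding dW_def
    by (simp add: mult_nonneg_nonneg mult_pos_pos)
  have Wdec: "W t \<le> W s" if "0 \<le> s" "s \<le> t" for s t
  proof -
    have "\<forall>t\<ge>0. ((\<lambda>t. - W t) has_real_derivative - dW t) (at t within {0..})"
      using DW by (auto intro!: derivative_eq_intros)
    from mono_deriv[OF this that] dWnp that show ?thesis by force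
  qed
  define Umax where "Umax = max (U 0) (3/4)"
  have Umax: "Umax < 1" "3/4 \<le> Umax" using cube[of 0] by (auto simp: Umax_def)
  have Ule: "U t \<le> Umax" if "t \<ge> 0" for t
  proof (rule trap[OF DU _ _ _ that, of "3/4"])
    fix t :: real assume t: "t > 0" "U t > 3/4"
    have c: "0 < U t" "U t < 1" "0 < Q t" "Q t < 1" using cube[of t] t by auto
    have "(1 - Q t) * (3 - 4 * U t) < 0" using c t by (simp add: mult_pos_neg)
    moreover have "N t * Q t * (1 - U t) \<ge> 0" using Nnn[of t] c t by simp
    ultimately have "(1 - Q t) * (3 - 4 * U t) - N t * Q t * (1 - U t) < 0" by linarith
    moreover have "U t * (1 - U t) > 0" using c by simp
    ultimately show "dU t < 0" unfolding dU_def by (simp add: mult_pos_neg)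
  qed (auto simp: Umax_def)
  define lQ where "lQ = (\<lambda>t. ln (Q t) - ln (1 - Q t))"
  define lU where "lU = (\<lambda>t. ln (U t) - ln (1 - U t))"
  define g where "g = (\<lambda>t. (2 * U t - 1) * (1 - Q t) + Q t * (1 - U t))"
  define h where "h = (\<lambda>t. (1 - Q t) * (3 - 4 * U t) - N t * Q t * (1 - U t))"
  have DlQ: "\<forall>t\<ge>0. (lQ has_real_derivative g t) (at t within {0..})"
  proof (intro allI impI)
    fix t :: real assume t: "t \<ge> 0"
    have "(lQ has_real_derivative dQ t / (Q t * (1 - Q t))) (at t within {0..})"
      unfolding lQ_def using logit_deriv[of Q "dQ t" t] DQ t cube[OF t] by auto
    moreover have "dQ t / (Q t * (1 - Q t)) = g t" using cube[OF t] by (simp add: dQ_def g_def)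
    ultimately show "(lQ has_real_derivative g t) (at t within {0..})" by simp
  qed
  have DlU: "\<forall>t\<ge>0. (lU has_real_derivative h t) (at t within {0..})"
  proof (intro allI impI)
    fix t :: real assume t: "t \<ge> 0"
    have "(lU has_real_derivative dU t / (U t * (1 - U t))) (at t within {0..})"
      unfolding lU_def using logit_deriv[of U "dU t" t] DU t cube[OF t] by auto
    moreover have "dU t / (U t * (1 - U t)) = h t" using cube[OF t] by (simp add: dU_def h_def)
    ultimately show "(lU has_real_derivative h t) (at t within {0..})" by simp
  qed
  define P where "P = (\<lambda>t. (K / a) / (1 - W t))"
  have DP: "\<forall>t\<ge>0. (P has_real_derivative - (K * W t * Q t * (1 - U t) / (1 - W t))) (at t within {0..})"
  proof (intro allI impI)
    fix t :: real assume t: "t \<ge> 0"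
    have "(P has_real_derivative (K / a) * dW t / (1 - W t)^2) (at t within {0..})"
      unfolding P_def using inv_deriv[of W "dW t" t "{0..}" "K / a"] DW t cube[OF t] by blast
    moreover have "(K / a) * dW t / (1 - W t)^2 = - (K * W t * Q t * (1 - U t) / (1 - W t))"
      using cube[OF t] a_pos dW_simp[of a "W t" K "Q t" "1 - U t"] by (simp add: dW_def mult.assoc)
    ultimately show "(P has_real_derivative - (K * W t * Q t * (1 - U t) / (1 - W t))) (at t within {0..})" by simp
  qed
  define Phi where "Phi = (\<lambda>t. 3 * lQ t + lU t - P t)"
  define dPhi where "dPhi = (\<lambda>t. 3 * g t + h t + K * W t * Q t * (1 - U t) / (1 - W t))"
  have DPhi: "\<forall>t\<ge>0. (Phi has_real_derivative dPhi t) (at t within {0..})"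
    using DlQ DlU DP unfolding Phi_def dPhi_def by (auto intro!: derivative_eq_intros)
  have dPhi_ge: "dPhi t \<ge> 2 * U t * (1 - Q t)" if t: "t \<ge> 0" for t
  proof -
    have id: "3 * g t + h t = 2 * U t * (1 - Q t) + (3 - N t) * Q t * (1 - U t)"
      unfolding g_def h_def by (simp add: algebra_simps)
    have "- (K * (W t / (1 - W t))) \<le> 3 - N t" using NK[OF t] by linarith
    hence "(- (K * (W t / (1 - W t)))) * (Q t * (1 - U t)) \<le> (3 - N t) * (Q t * (1 - U t))"
      using cube[OF t] by (intro mult_right_mono) auto
    hence "0 \<le> (3 - N t) * Q t * (1 - U t) + K * W t * Q t * (1 - U t) / (1 - W t)"
      by (simp add: algebra_simps)
    then show ?thesis unfolding dPhi_def using id by linarith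
  qed
  have Phi_mono: "Phi s \<le> Phi t" if "0 \<le> s" "s \<le> t" for s t
  proof (rule mono_deriv[OF DPhi that])
    fix \<tau> assume "s < \<tau>" "\<tau> < t"
    hence "\<tau> \<ge> 0" using that by simp
    then show "dPhi \<tau> \<ge> 0" using dPhi_ge[of \<tau>] cube[of \<tau>] by (smt (verit) mult_nonneg_nonneg)
  qed
  have Pge: "P t \<ge> K / a" if "t \<ge> 0" for t
  proof -
    have "0 < 1 - W t" "1 - W t \<le> 1" using cube[OF that] by auto
    then show ?thesis unfolding P_def using K a_pos by (simp add: divide_le_eq_1 le_divide_eq)
  qed
  define c1 where "c1 = Phi 0 + K / a"
  have Lge: "3 * lQ t + lU t \<ge> c1" if "t \<ge> 0" for t
    using Phi_mono[of 0 t] Pge[OF that] that unfolding c1_def Phi_def by simp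
  define lsmax where "lsmax = ln Umax - ln (1 - Umax)"
  have lUle: "lU t \<le> lsmax" if "t \<ge> 0" for t
    unfolding lU_def lsmax_def using logit_mono[of "U t" Umax] cube[OF that] Ule[OF that] Umax by simp
  define lqmin where "lqmin = (c1 - lsmax) / 3"
  define Qmin where "Qmin = exp lqmin / (1 + exp lqmin)"
  have Qmin: "Qmin > 0" unfolding Qmin_def by (simp add: add_pos_pos)
  have Qge: "Q t \<ge> Qmin" if "t \<ge> 0" for t
  proof -
    have "lQ t \<ge> lqmin" using Lge[OF that] lUle[OF that] unfolding lqmin_def by simp
    then show ?thesis unfolding Qmin_def lQ_def using logit_ge[of "Q t" lqmin] cube[OF that] by simp
  qed
  define \<kappa> where "\<kappa> = a * (1 - W 0) * Qmin * (1 - Umax)"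
  have kappa: "\<kappa> > 0" unfolding \<kappa>_def using a_pos cube[of 0] Qmin Umax by simp
  have DlW: "\<forall>t\<ge>0. ((\<lambda>t. - ln (W t) - \<kappa> * t) has_real_derivative - (dW t / W t) - \<kappa>) (at t within {0..})"
    using DW cube by (auto intro!: derivative_eq_intros)
  have lWle: "ln (W t) \<le> ln (W 0) - \<kappa> * t" if "t \<ge> 0" for t
  proof -
    have "- ln (W 0) - \<kappa> * 0 \<le> - ln (W t) - \<kappa> * t"
    proof (rule mono_deriv[OF DlW _ that])
      fix \<tau> :: real assume "0 < \<tau>" "\<tau> < t"
      hence tau: "\<tau> \<ge> 0" by simp
      have c: "0 < U \<tau>" "U \<tau> < 1" "0 < Q \<tau>" "Q \<tau> < 1" "0 < W \<tau>" "W \<tau> < 1" using cube[OF tau] by auto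
      have e: "dW \<tau> / W \<tau> = - (a * (1 - W \<tau>) * Q \<tau> * (1 - U \<tau>))"
        using c unfolding dW_def by simp
      have "1 - W 0 \<le> 1 - W \<tau>" using Wdec[of 0 \<tau>] tau by simp
      moreover have "Qmin \<le> Q \<tau>" using Qge[OF tau] .
      moreover have "1 - Umax \<le> 1 - U \<tau>" using Ule[OF tau] by simp
      ultimately have "\<kappa> \<le> a * (1 - W \<tau>) * Q \<tau> * (1 - U \<tau>)"
        unfolding \<kappa>_def using a_pos cube[of 0] Qmin Umax c
        by (intro mult_mono) (auto intro!: mult_nonneg_nonneg)
      then show "0 \<le> - (dW \<tau> / W \<tau>) - \<kappa>" using e by simp
    qed simp
    then show ?thesis by simp
  qed
  have Wle: "W t \<le> exp (ln (W 0) - \<kappa> * t)" if "t \<ge> 0" for t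
    using lWle[OF that] cube[OF that] by (metis exp_le_cancel_iff exp_ln)
  have Wlim: "(W \<longlongrightarrow> 0) at_top"
  proof (rule tendsto_sandwich[of "\<lambda>_. 0" W at_top "\<lambda>t. exp (ln (W 0) - \<kappa> * t)"])
    show "eventually (\<lambda>t. 0 \<le> W t) at_top"
      using eventually_ge_at_top[of "0::real"] by eventually_elim (use cube in \<open>auto intro: less_imp_le\<close>)
    show "eventually (\<lambda>t. W t \<le> exp (ln (W 0) - \<kappa> * t)) at_top"
      using eventually_ge_at_top[of "0::real"] by eventually_elim (use Wle in auto)
    show "((\<lambda>t. exp (ln (W 0) - \<kappa> * t)) \<longlongrightarrow> 0) at_top" using kappa by real_asymp
  qed simp
  have dQle: "dQ t \<le> 1" if "t \<ge> 0" for t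
  proof -
    have c: "0 < U t" "U t < 1" "0 < Q t" "Q t < 1" using cube[OF that] by auto
    have "(2 * U t - 1) * (1 - Q t) \<le> 1 * (1 - Q t)" using c by (intro mult_right_mono) auto
    moreover have "Q t * (1 - U t) \<le> Q t * 1" using c by (intro mult_left_mono) auto
    ultimately have gl: "g t \<le> 1" unfolding g_def by simp
    have "dQ t = (Q t * (1 - Q t)) * g t" unfolding dQ_def g_def by simp
    also have "\<dots> \<le> (Q t * (1 - Q t)) * 1" using gl c by (intro mult_left_mono) auto
    also have "\<dots> \<le> 1"
    proof -
      have "Q t * (1 - Q t) \<le> 1 * 1" using c by (intro mult_mono) auto
      then show ?thesis by simp
    qed
    finally show ?thesis .
  qed
  have Qlip: "Q t' \<le> Q t + (t' - t)" if "0 \<le> t" "t \<le> t'" for t t'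
  proof -
    have D: "\<forall>t\<ge>0. ((\<lambda>\<tau>. \<tau> - Q \<tau>) has_real_derivative 1 - dQ t) (at t within {0..})"
      using DQ by (auto intro!: derivative_eq_intros)
    have "t - Q t \<le> t' - Q t'"
      by (rule mono_deriv[OF D that]) (use dQle that in auto)
    then show ?thesis by simp
  qed
  have Qev: "\<exists>T. \<forall>t\<ge>T. Q t > 1 - \<epsilon>" if \<epsilon>: "0 < \<epsilon>" "\<epsilon> < 1" for \<epsilon>
  proof (rule ccontr)
    assume "\<not> ?thesis"
    hence fr: "\<forall>T. \<exists>t\<ge>T. Q t \<le> 1 - \<epsilon>" by (auto simp: not_less)
    define A where "A = ln (1 - \<epsilon>/2) - ln (\<epsilon>/2)"
    define B where "B = c1 - 3 * A"
    define u1 where "u1 = exp B / (1 + exp B)"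
    have u1: "u1 > 0" unfolding u1_def by (simp add: add_pos_pos)
    have lQA: "lQ \<tau> \<le> A" if "\<tau> \<ge> 0" "Q \<tau> \<le> 1 - \<epsilon>/2" for \<tau>
      using logit_mono[of "Q \<tau>" "1 - \<epsilon>/2"] cube[OF that(1)] that \<epsilon> unfolding lQ_def A_def by simp
    have f1: "U \<tau> \<ge> u1" if "\<tau> \<ge> 0" "Q \<tau> \<le> 1 - \<epsilon>/2" for \<tau>
    proof -
      have "lU \<tau> \<ge> B" using Lge[OF that(1)] lQA[OF that] unfolding B_def by simp
      then show ?thesis unfolding u1_def lU_def using logit_ge[of "U \<tau>" B] cube[OF that(1)] by simp
    qed
    define Bup where "Bup = 3 * A + lsmax - K / a"
    have f2: "Phi \<tau> \<le> Bup" if "\<tau> \<ge> 0" "Q \<tau> \<le> 1 - \<epsilon>/2" for \<tau>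
      using lQA[OF that] lUle[OF that(1)] Pge[OF that(1)] unfolding Phi_def Bup_def by simp
    define inc where "inc = u1 * \<epsilon> * (\<epsilon> / 2)"
    have inc: "inc > 0" unfolding inc_def using u1 \<epsilon> by simp
    have f3: "Phi (t + \<epsilon>/2) \<ge> Phi t + inc" if t: "t \<ge> 0" "Q t \<le> 1 - \<epsilon>" for t
    proof -
      have D: "\<forall>t\<ge>0. ((\<lambda>\<tau>. Phi \<tau> - u1 * \<epsilon> * \<tau>) has_real_derivative dPhi t - u1 * \<epsilon>) (at t within {0..})"
        using DPhi by (auto intro!: derivative_eq_intros)
      have "Phi t - u1 * \<epsilon> * t \<le> Phi (t + \<epsilon>/2) - u1 * \<epsilon> * (t + \<epsilon>/2)"
      proof (rule mono_deriv[OF D t(1)])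
        show "t \<le> t + \<epsilon>/2" using \<epsilon> by simp
        fix \<tau> assume tau: "t < \<tau>" "\<tau> < t + \<epsilon>/2"
        hence tau0: "\<tau> \<ge> 0" using t by simp
        have "Q \<tau> \<le> Q t + (\<tau> - t)" using Qlip[of t \<tau>] t tau by simp
        hence Qt: "Q \<tau> \<le> 1 - \<epsilon>/2" using t tau by simp
        have "u1 * (\<epsilon>/2) \<le> U \<tau> * (1 - Q \<tau>)"
          using f1[OF tau0 Qt] Qt u1 \<epsilon> by (intro mult_mono) auto
        hence "u1 * \<epsilon> \<le> 2 * U \<tau> * (1 - Q \<tau>)" by simp
        then show "0 \<le> dPhi \<tau> - u1 * \<epsilon>" using dPhi_ge[OF tau0] by simp
      qed
      then show ?thesis unfolding inc_def by (simp add: algebra_simps)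
    qed
    have f4: "\<exists>t\<ge>0. Q t \<le> 1 - \<epsilon> \<and> Phi t \<ge> Phi 0 + real m * inc" for m :: nat
    proof (induction m)
      case 0
      obtain t where "t \<ge> 0" "Q t \<le> 1 - \<epsilon>" using fr by blast
      then show ?case using Phi_mono[of 0 t] by auto
    next
      case (Suc m)
      then obtain t where t: "t \<ge> 0" "Q t \<le> 1 - \<epsilon>" "Phi t \<ge> Phi 0 + real m * inc" by blast
      obtain t' where t': "t' \<ge> t + \<epsilon>/2" "Q t' \<le> 1 - \<epsilon>" using fr by blast
      have "Phi t' \<ge> Phi (t + \<epsilon>/2)" using Phi_mono[of "t + \<epsilon>/2" t'] t t' \<epsilon> by simp
      moreover have "Phi (t + \<epsilon>/2) \<ge> Phi t + inc" using f3 t by simp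
      ultimately have "Phi t' \<ge> Phi 0 + real (Suc m) * inc" using t by (simp add: algebra_simps)
      moreover have "t' \<ge> 0" using t t' \<epsilon> by simp
      ultimately show ?case using t' by blast
    qed
    obtain m :: nat where m: "Bup - Phi 0 < real m * inc" using reals_Archimedean3[OF inc] by blast
    obtain t where t: "t \<ge> 0" "Q t \<le> 1 - \<epsilon>" "Phi t \<ge> Phi 0 + real m * inc" using f4 by blast
    have "Phi t \<le> Bup" using f2[of t] t \<epsilon> by simp
    then show False using m t by simp
  qed
  have Qlim: "(Q \<longlongrightarrow> 1) at_top"
  proof (rule tendstoI)
    fix e :: real assume e: "e > 0"
    define \<epsilon> where "\<epsilon> = min e (1/2)"
    have "0 < \<epsilon>" "\<epsilon> < 1" using e by (auto simp: \<epsilon>_def)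
    then obtain T where T: "\<forall>t\<ge>T. Q t > 1 - \<epsilon>" using Qev[of \<epsilon>] by blast
    show "eventually (\<lambda>t. dist (Q t) 1 < e) at_top"
      unfolding eventually_at_top_linorder
    proof (intro exI[of _ "max T 0"] allI impI)
      fix t assume "t \<ge> max T 0"
      then have "Q t > 1 - \<epsilon>" "Q t < 1" using T cube[of t] by auto
      then show "dist (Q t) 1 < e" unfolding dist_real_def \<epsilon>_def by auto
    qed
  qed
  define \<delta>1 where "\<delta>1 = (1 - Umax) / 6"
  define \<eta> where "\<eta> = (1 - Umax) / 2"
  have d1: "0 < \<delta>1" "\<delta>1 < 1" "\<delta>1 \<le> 1/2" using Umax by (auto simp: \<delta>1_def)
  have eta: "\<eta> > 0" using Umax by (simp add: \<eta>_def)
  define wst where "wst = (1 - W 0) / K"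
  have wst: "wst > 0" using cube[of 0] K by (simp add: wst_def)
  have ev1: "eventually (\<lambda>t. W t < wst) at_top" using order_tendstoD(2)[OF Wlim wst] .
  obtain T1 where T1: "\<forall>t\<ge>T1. W t < wst" using ev1 unfolding eventually_at_top_linorder by blast
  obtain T2 where T2: "\<forall>t\<ge>T2. Q t > 1 - \<delta>1" using Qev[OF d1(1,2)] by blast
  define T where "T = max (max T1 T2) 0"
  have T: "T \<ge> 0" "\<And>t. t \<ge> T \<Longrightarrow> W t < wst \<and> Q t > 1 - \<delta>1" using T1 T2 by (auto simp: T_def)
  have hle: "h t \<le> - \<eta>" if t: "t \<ge> T" for t
  proof -
    have t0: "t \<ge> 0" using T t by simp
    have c: "0 < U t" "U t < 1" "0 < Q t" "Q t < 1" "0 < W t" "W t < 1" using cube[OF t0] by auto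
    have Wt: "W t < wst" "Q t > 1 - \<delta>1" using T(2)[OF t] by auto
    have "1 - W 0 \<le> 1 - W t" using Wdec[of 0 t] t0 by simp
    hence "K * (W t / (1 - W t)) \<le> K * (W t / (1 - W 0))" using c K cube[of 0]
      by (intro mult_left_mono divide_left_mono) auto
    also have "\<dots> < K * (wst / (1 - W 0))" using Wt c K cube[of 0]
      by (intro mult_strict_left_mono divide_strict_right_mono) auto
    also have "\<dots> = 1" unfolding wst_def using K cube[of 0] by simp
    finally have "N t \<ge> 2" using NK[OF t0] by linarith
    have "(1 - Q t) * (3 - 4 * U t) \<le> (1 - Q t) * 3" using c by (intro mult_left_mono) auto
    moreover have "(1 - Q t) * 3 = 3 - 3 * Q t" by simp
    ultimately have a1: "(1 - Q t) * (3 - 4 * U t) \<le> \<delta>1 * 3" using Wt by linarith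
    have "2 * (1/2) * (1 - Umax) \<le> N t * Q t * (1 - U t)"
      using \<open>N t \<ge> 2\<close> Wt d1 c Ule[OF t0] Umax by (intro mult_mono) auto
    then show ?thesis using a1 unfolding h_def \<eta>_def \<delta>1_def by linarith
  qed
  have lUdec: "lU t \<le> lU T - \<eta> * (t - T)" if t: "t \<ge> T" for t
  proof -
    have D: "\<forall>t\<ge>0. ((\<lambda>\<tau>. - lU \<tau> - \<eta> * \<tau>) has_real_derivative - h t - \<eta>) (at t within {0..})"
      using DlU by (auto intro!: derivative_eq_intros)
    have "- lU T - \<eta> * T \<le> - lU t - \<eta> * t"
    proof (rule mono_deriv[OF D T(1) t])
      fix \<tau> assume "T < \<tau>" "\<tau> < t"
      then show "0 \<le> - h \<tau> - \<eta>" using hle[of \<tau>] by simp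
    qed
    then show ?thesis by (simp add: algebra_simps)
  qed
  have Ubound: "U t \<le> exp (lU T - \<eta> * (t - T))" if t: "t \<ge> T" for t
  proof -
    have t0: "t \<ge> 0" using T t by simp
    have c: "0 < U t" "U t < 1" using cube[OF t0] by auto
    have "ln (1 - U t) < 0" using c by simp
    hence "ln (U t) \<le> lU t" unfolding lU_def by simp
    hence "ln (U t) \<le> lU T - \<eta> * (t - T)" using lUdec[OF t] by simp
    then show ?thesis using c by (metis exp_le_cancel_iff exp_ln)
  qed
  have Ulim: "(U \<longlongrightarrow> 0) at_top"
  proof (rule tendsto_sandwich[of "\<lambda>_. 0" U at_top "\<lambda>t. exp (lU T - \<eta> * (t - T))"])
    show "eventually (\<lambda>t. 0 \<le> U t) at_top"
      using eventually_ge_at_top[of "0::real"] by eventually_elim (use cube in \<open>auto intro: less_imp_le\<close>)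
    show "eventually (\<lambda>t. U t \<le> exp (lU T - \<eta> * (t - T))) at_top"
      using eventually_ge_at_top[of T] by eventually_elim (use Ubound in auto)
    show "((\<lambda>t. exp (lU T - \<eta> * (t - T))) \<longlongrightarrow> 0) at_top" using eta by real_asymp
  qed simp
  have xlim: "(x \<longlongrightarrow> (0, 1, 0)) at_top"
  proof -
    have "((\<lambda>t. (U t, Q t, W t)) \<longlongrightarrow> (0, 1, 0)) at_top"
      by (intro tendsto_Pair Ulim Qlim Wlim)
    moreover have "(\<lambda>t. (U t, Q t, W t)) = x" using xt by auto
    ultimately show ?thesis by simp
  qed
  have part1: "\<not> (x \<longlongrightarrow> (0, 1/2, 0)) at_top"
  proof
    assume "(x \<longlongrightarrow> (0, 1/2, 0)) at_top"
    from tendsto_unique[OF _ this xlim] show False by simp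
  qed
  have part2: "omega_limit x = {(0, 1, 0)}"
  proof
    show "omega_limit x \<subseteq> {(0, 1, 0)}"
    proof
      fix p assume "p \<in> omega_limit x"
      then obtain s :: "nat \<Rightarrow> real" where s: "filterlim s at_top sequentially" "((x \<circ> s) \<longlongrightarrow> p) sequentially"
        unfolding omega_limit_def by blast
      have "((x \<circ> s) \<longlongrightarrow> (0, 1, 0)) sequentially"
        unfolding comp_def by (rule filterlim_compose[OF xlim s(1)])
      then have "p = (0, 1, 0)" using s(2) LIMSEQ_unique by blast
      then show "p \<in> {(0, 1, 0)}" by simp
    qed
    show "{(0, 1, 0)} \<subseteq> omega_limit x"
    proof -
      have "((x \<circ> real) \<longlongrightarrow> (0, 1, 0)) sequentially"
        unfolding comp_def by (rule filterlim_compose[OF xlim filterlim_real_sequentially])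
      then show ?thesis unfolding omega_limit_def using filterlim_real_sequentially by blast
    qed
  qed
  show ?thesis using part1 part2 by blast
qed

end
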